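(* For $a\in\mathbb{R}$ define $\mathcal{L}_a:\mathcal{M}_2\to\mathcal{M}_2$ by $$\mathcal{L}_a(X)=(\operatorname{Tr}X)\,\mathbb{1}-a\,\Delta(X)-(2-a)X,\qquad \Delta(X)=P_0XP_0+P_1XP_1,$$ where $P_0=|0\rangle\langle 0|$, $P_1=|1\rangle\langle 1|$ for the standard basis $\{|0\rangle,|1\rangle\}$ of $\mathbb{C}^2$. Then $e^{t\mathcal{L}_a}$ is a unital Schwarz map for every $t\ge 0$ if and only if $a\le 3/2$.
   Context: A unital Schwarz map on $\mathcal{M}_n$ is a linear map $\Phi$ with $\Phi(\mathbb{1})=\mathbb{1}$ and $\Phi(X^\dagger X)\ge\Phi(X)^\dagger\Phi(X)$ for all $X\in\mathcal{M}_n$. Note $\mathcal{L}_a$ is self-dual with respect to the Hilbert–Schmidt inner product and $\mathcal{L}_a(\mathbb{1})=0$. *)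

theory Defs
  imports "HOL-Analysis.Analysis"
begin

text \<open>2x2 complex matrices, rows/columns indexed by the type 2 (elements 1, 2);
  index 1 corresponds to basis vector |0>, index 2 to |1>.\<close>
type_synonym mat2 = "complex ^ 2 ^ 2"

definition cscale :: "complex \<Rightarrow> mat2 \<Rightarrow> mat2" where
  "cscale c X = (\<chi> i j. c * X $ i $ j)"

definition adjoint2 :: "mat2 \<Rightarrow> mat2" where
  "adjoint2 A = (\<chi> i j. cnj (A $ j $ i))"

definition psd2 :: "mat2 \<Rightarrow> bool" where
  "psd2 A \<longleftrightarrow> (\<forall>v :: complex ^ 2.
     (\<Sum>i\<in>UNIV. cnj (v $ i) * (A *v v) $ i) \<in> \<real> \<and>
     Re (\<Sum>i\<in>UNIV. cnj (v $ i) * (A *v v) $ i) \<ge> 0)"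

definition unital_schwarz :: "(mat2 \<Rightarrow> mat2) \<Rightarrow> bool" where
  "unital_schwarz \<Phi> \<longleftrightarrow>
     (\<forall>X Y. \<Phi> (X + Y) = \<Phi> X + \<Phi> Y) \<and>
     (\<forall>c X. \<Phi> (cscale c X) = cscale c (\<Phi> X)) \<and>
     \<Phi> (mat 1) = mat 1 \<and>
     (\<forall>X. psd2 (\<Phi> (adjoint2 X ** X) - adjoint2 (\<Phi> X) ** \<Phi> X))"

definition P0 :: mat2 where "P0 = (\<chi> i j. if i = 1 \<and> j = 1 then 1 else 0)"
definition P1 :: mat2 where "P1 = (\<chi> i j. if i = 2 \<and> j = 2 then 1 else 0)"

definition Dephase :: "mat2 \<Rightarrow> mat2" where
  "Dephase X = P0 ** X ** P0 + P1 ** X ** P1"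

definition Lgen :: "real \<Rightarrow> mat2 \<Rightarrow> mat2" where
  "Lgen a X = cscale (trace X) (mat 1) - a *\<^sub>R Dephase X - (2 - a) *\<^sub>R X"

definition expL :: "real \<Rightarrow> (mat2 \<Rightarrow> mat2) \<Rightarrow> mat2 \<Rightarrow> mat2" where
  "expL t L X = (\<Sum>n. (t ^ n / fact n) *\<^sub>R (L ^^ n) X)"

end

theory Submission
  imports Defs
begin

lemma mat2_eq: "(A::mat2) = B \<longleftrightarrow> A$1$1 = B$1$1 \<and> A$1$2 = B$1$2 \<and> A$2$1 = B$2$1 \<and> A$2$2 = B$2$2"
  by (auto simp: vec_eq_iff forall_2)

lemma trace2: "trace (X::mat2) = X$1$1 + X$2$2"
  by (simp add: trace_def sum_2)

lemma sR: "r *\<^sub>R (z::complex) = of_real r * z" by (simp add: scaleR_conv_of_real)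

lemma Lgen_entries:
  "Lgen a X $ 1 $ 1 = X$2$2 - X$1$1"
  "Lgen a X $ 2 $ 2 = X$1$1 - X$2$2"
  "Lgen a X $ 1 $ 2 = of_real (a - 2) * X$1$2"
  "Lgen a X $ 2 $ 1 = of_real (a - 2) * X$2$1"
  by (simp_all add: Lgen_def cscale_def Dephase_def P0_def P1_def matrix_matrix_mult_def
      sum_2 trace2 mat_def sR algebra_simps)


definition AX :: "mat2 \<Rightarrow> mat2" where "AX X = (\<chi> i j. if i = j then trace X / 2 else 0)"
definition BX :: "mat2 \<Rightarrow> mat2" where "BX X = (\<chi> i j. if i = j then X$i$j - trace X / 2 else 0)"
definition CX :: "mat2 \<Rightarrow> mat2" where "CX X = (\<chi> i j. if i = j then 0 else X$i$j)"

lemmas ent = AX_def BX_def CX_def trace2 Lgen_entries sR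

lemma Lgen_pow: "(Lgen a ^^ n) X = (0^n) *\<^sub>R AX X + ((-2)^n) *\<^sub>R BX X + ((a-2)^n) *\<^sub>R CX X"
proof (induction n)
  case 0
  show ?case by (simp add: mat2_eq ent field_simps)
next
  case (Suc n)
  show ?case by (simp add: Suc mat2_eq ent field_simps)
qed

definition Phi :: "real \<Rightarrow> real \<Rightarrow> mat2 \<Rightarrow> mat2" where
  "Phi p q X = AX X + p *\<^sub>R BX X + q *\<^sub>R CX X"

lemma expL_Phi: "expL t (Lgen a) X = Phi (exp (-2*t)) (exp ((a-2)*t)) X"
proof -
  have e: "(\<lambda>n. ((c*t)^n / fact n) *\<^sub>R M) sums (exp (c*t) *\<^sub>R M)" for c and M :: mat2
    using sums_scaleR_left[OF exp_converges[of "c*t"]] by (simp add: divide_inverse_commute)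
  have "(\<lambda>n. ((0*t)^n / fact n) *\<^sub>R AX X + ((-2*t)^n / fact n) *\<^sub>R BX X + (((a-2)*t)^n / fact n) *\<^sub>R CX X)
     sums (exp (0*t) *\<^sub>R AX X + exp (-2*t) *\<^sub>R BX X + exp ((a-2)*t) *\<^sub>R CX X)"
    by (intro sums_add e)
  moreover have "(\<lambda>n. ((0*t)^n / fact n) *\<^sub>R AX X + ((-2*t)^n / fact n) *\<^sub>R BX X + (((a-2)*t)^n / fact n) *\<^sub>R CX X)
     = (\<lambda>n. (t ^ n / fact n) *\<^sub>R (Lgen a ^^ n) X)"
    proof (rule ext)
    fix n
    have pw: "(c*t)^n = t^n * c^n" for c :: real by (simp add: power_mult_distrib mult.commute)
    show "((0*t)^n / fact n) *\<^sub>R AX X + ((-2*t)^n / fact n) *\<^sub>R BX X + (((a-2)*t)^n / fact n) *\<^sub>R CX X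
      = (t ^ n / fact n) *\<^sub>R (Lgen a ^^ n) X"
      unfolding pw Lgen_pow by (simp add: scaleR_add_right)
  qed
  ultimately show ?thesis unfolding expL_def Phi_def by (simp add: sums_unique[symmetric])
qed


lemma Phi_entries:
  "Phi p q X $ 1 $ 1 = of_real ((1+p)/2) * X$1$1 + of_real ((1-p)/2) * X$2$2"
  "Phi p q X $ 2 $ 2 = of_real ((1-p)/2) * X$1$1 + of_real ((1+p)/2) * X$2$2"
  "Phi p q X $ 1 $ 2 = of_real q * X$1$2"
  "Phi p q X $ 2 $ 1 = of_real q * X$2$1"
  by (simp_all add: Phi_def ent field_simps)

definition Dm :: "real \<Rightarrow> real \<Rightarrow> mat2 \<Rightarrow> mat2" where
  "Dm p q X = Phi p q (adjoint2 X ** X) - adjoint2 (Phi p q X) ** Phi p q X"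

lemma nsq: "complex_of_real ((cmod z)^2) = z * cnj z" by (rule complex_norm_square)

lemma Dm_11: "Dm p q X $ 1 $ 1 = of_real (((1+p)/2)*((1-p)/2)*(cmod (X$1$1 - X$2$2))^2
   + ((1+p)/2 - q^2) * (cmod (X$2$1))^2 + ((1-p)/2) * (cmod (X$1$2))^2)"
  apply (simp only: of_real_add of_real_mult nsq)
  apply (simp add: Dm_def Phi_entries adjoint2_def matrix_matrix_mult_def sum_2 field_simps)
  apply (simp add: algebra_simps power2_eq_square)
  done

lemma Dm_22: "Dm p q X $ 2 $ 2 = of_real (((1+p)/2)*((1-p)/2)*(cmod (X$1$1 - X$2$2))^2
   + ((1+p)/2 - q^2) * (cmod (X$1$2))^2 + ((1-p)/2) * (cmod (X$2$1))^2)"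
  apply (simp only: of_real_add of_real_mult nsq)
  apply (simp add: Dm_def Phi_entries adjoint2_def matrix_matrix_mult_def sum_2 field_simps)
  apply (simp add: algebra_simps power2_eq_square)
  done

lemma Dm_12: "Dm p q X $ 1 $ 2 = of_real (q*((1-p)/2)) *
   (cnj (X$1$1 - X$2$2) * X$1$2 - cnj (X$2$1) * (X$1$1 - X$2$2))"
  apply (simp add: Dm_def Phi_entries adjoint2_def matrix_matrix_mult_def sum_2 field_simps)
  done

lemma Dm_21: "Dm p q X $ 2 $ 1 = cnj (Dm p q X $ 1 $ 2)"
  apply (simp add: Dm_12)
  apply (simp add: Dm_def Phi_entries adjoint2_def matrix_matrix_mult_def sum_2 field_simps)
  done


lemma amgm_aux:
  fixes r1 r2 c a b :: real
  assumes "r1 \<ge> 0" "r2 \<ge> 0" "c \<ge> 0" "a \<ge> 0" "b \<ge> 0" "c^2 \<le> r1*r2"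
  shows "2*c*a*b \<le> r1*a^2 + r2*b^2"
proof -
  have "(2*c*a*b)^2 = 4*c^2*(a^2*b^2)" by algebra
  also have "\<dots> \<le> 4*(r1*r2)*(a^2*b^2)"
    by (rule mult_right_mono) (use assms(6) in simp_all)
  also have "\<dots> \<le> (r1*a^2 - r2*b^2)^2 + 4*(r1*r2)*(a^2*b^2)" by simp
  also have "\<dots> = (r1*a^2 + r2*b^2)^2" by algebra
  finally have "(2*c*a*b)^2 \<le> (r1*a^2 + r2*b^2)^2" .
  moreover have "0 \<le> r1*a^2 + r2*b^2" using assms by simp
  ultimately show ?thesis by (rule power2_le_imp_le)
qed

lemma psd2_crit:
  fixes D :: mat2
  assumes d1: "D$1$1 = of_real r1" and d2: "D$2$2 = of_real r2" and d3: "D$2$1 = cnj (D$1$2)"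
    and "r1 \<ge> 0" "r2 \<ge> 0" "(cmod (D$1$2))^2 \<le> r1*r2"
  shows "psd2 D"
  unfolding psd2_def
proof
  fix v :: "complex^2"
  define z where "z = cnj (v$1) * D$1$2 * v$2"
  define R where "R = r1 * (cmod (v$1))^2 + r2 * (cmod (v$2))^2 + 2 * Re z"
  have S: "(\<Sum>i\<in>UNIV. cnj (v $ i) * (D *v v) $ i) = of_real R"
  proof -
    have "(\<Sum>i\<in>UNIV. cnj (v $ i) * (D *v v) $ i) = cnj (v$1) * (of_real r1 * v$1 + D$1$2 * v$2)
        + cnj (v$2) * (cnj (D$1$2) * v$1 + of_real r2 * v$2)"
      by (simp add: sum_2 matrix_vector_mult_def d1 d2 d3)
    also have "\<dots> = of_real r1 * (v$1 * cnj (v$1)) + of_real r2 * (v$2 * cnj (v$2)) + (z + cnj z)"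
      unfolding z_def by (simp add: algebra_simps)
    also have "\<dots> = of_real R"
      unfolding R_def complex_add_cnj nsq[symmetric] by simp
    finally show ?thesis .
  qed
  have "- (cmod (D$1$2) * cmod (v$1) * cmod (v$2)) \<le> Re z"
  proof -
    have h1: "\<bar>Re z\<bar> \<le> cmod z" by (rule abs_Re_le_cmod)
    have h2: "cmod z = cmod (D$1$2) * cmod (v$1) * cmod (v$2)" unfolding z_def by (simp add: norm_mult)
    show ?thesis using h1 unfolding h2 by linarith
  qed
  moreover have "2 * cmod (D$1$2) * cmod (v$1) * cmod (v$2) \<le> r1 * (cmod (v$1))^2 + r2 * (cmod (v$2))^2"
    using assms by (intro amgm_aux) auto
  ultimately have "R \<ge> 0" unfolding R_def by linarith
  then show "(\<Sum>i\<in>UNIV. cnj (v $ i) * (D *v v) $ i) \<in> \<real> \<and>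
     Re (\<Sum>i\<in>UNIV. cnj (v $ i) * (D *v v) $ i) \<ge> 0" unfolding S by simp
qed


lemma key_ineq:
  fixes lam mu q r u v :: real
  assumes "lam \<ge> 0" "mu \<ge> 0" "q^2 \<le> lam" "r \<ge> 0" "u \<ge> 0" "v \<ge> 0"
  shows "q^2*mu^2*r^2*(u+v)^2 \<le> (lam*mu*r^2 + (lam-q^2)* v^2 + mu*u^2)*(lam*mu*r^2 + (lam-q^2)*u^2 + mu* v^2)"
proof -
  define al where "al = lam - q^2"
  have al: "al \<ge> 0" using assms unfolding al_def by simp
  have q2: "q^2 = lam - al" unfolding al_def by simp
  have "(lam*mu*r^2 + (lam-q^2)* v^2 + mu*u^2)*(lam*mu*r^2 + (lam-q^2)*u^2 + mu* v^2) - q^2*mu^2*r^2*(u+v)^2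
     = mu^2*(lam*r^2 - u* v)^2 + lam*mu*al*r^2*(u^2+v^2) + al*mu^2*r^2*(u^2+v^2) + 2*al*mu^2*r^2*u* v
       + al^2*u^2* v^2 + al*mu*(u^4+v^4)"
    unfolding q2 by algebra
  also have "\<dots> \<ge> 0" using assms al by (intro add_nonneg_nonneg mult_nonneg_nonneg) auto
  finally show ?thesis by simp
qed

lemma schwarz_Phi:
  assumes p0: "0 \<le> p" and p1: "p \<le> 1" and q0: "0 \<le> q" and qp: "q^2 \<le> (1+p)/2"
  shows "unital_schwarz (Phi p q)"
  unfolding unital_schwarz_def
proof (intro conjI allI)
  fix X Y show "Phi p q (X + Y) = Phi p q X + Phi p q Y"
    by (simp add: mat2_eq Phi_entries algebra_simps)
next
  fix c X show "Phi p q (cscale c X) = cscale c (Phi p q X)"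
    by (simp add: mat2_eq Phi_entries cscale_def algebra_simps)
next
  show "Phi p q (mat 1) = mat 1"
    by (simp add: mat2_eq Phi_entries mat_def flip: of_real_add of_real_divide) (simp add: field_simps)
next
  fix X :: mat2
  define lam where "lam = (1+p)/2"
  define mu where "mu = (1-p)/2"
  define r where "r = cmod (X$1$1 - X$2$2)"
  define u where "u = cmod (X$1$2)"
  define v where "v = cmod (X$2$1)"
  have lam0: "lam \<ge> 0" and mu0: "mu \<ge> 0" and ql: "q^2 \<le> lam"
    using p0 p1 qp unfolding lam_def mu_def by auto
  have "psd2 (Dm p q X)"
  proof (rule psd2_crit)
    show "Dm p q X $ 1 $ 1 = of_real (lam*mu*r^2 + (lam-q^2)* v^2 + mu*u^2)"
      unfolding Dm_11 lam_def mu_def r_def u_def v_def ..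
    show "Dm p q X $ 2 $ 2 = of_real (lam*mu*r^2 + (lam-q^2)*u^2 + mu* v^2)"
      unfolding Dm_22 lam_def mu_def r_def u_def v_def ..
    show "Dm p q X $ 2 $ 1 = cnj (Dm p q X $ 1 $ 2)" by (rule Dm_21)
    show "0 \<le> lam*mu*r^2 + (lam-q^2)* v^2 + mu*u^2" using lam0 mu0 ql by simp
    show "0 \<le> lam*mu*r^2 + (lam-q^2)*u^2 + mu* v^2" using lam0 mu0 ql by simp
    have "cmod (Dm p q X $ 1 $ 2) = q*mu * cmod (cnj (X$1$1 - X$2$2) * X$1$2 - cnj (X$2$1) * (X$1$1 - X$2$2))"
      unfolding Dm_12 mu_def norm_mult norm_of_real using q0 p1 by simp
    also have "\<dots> \<le> q*mu * (r * u + v * r)"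
    proof (rule mult_left_mono)
      show "cmod (cnj (X$1$1 - X$2$2) * X$1$2 - cnj (X$2$1) * (X$1$1 - X$2$2)) \<le> r * u + v * r"
        using norm_triangle_ineq4[of "cnj (X$1$1 - X$2$2) * X$1$2" "cnj (X$2$1) * (X$1$1 - X$2$2)"]
        unfolding r_def u_def v_def by (simp add: norm_mult complex_mod_cnj del: complex_cnj_diff)
      show "0 \<le> q*mu" using q0 mu0 by simp
    qed
    finally have "(cmod (Dm p q X $ 1 $ 2))^2 \<le> (q*mu * (r * u + v * r))^2"
      by (rule power_mono) simp
    also have "\<dots> = q^2*mu^2*r^2*(u+v)^2" by algebra
    also have "\<dots> \<le> (lam*mu*r^2 + (lam-q^2)* v^2 + mu*u^2)*(lam*mu*r^2 + (lam-q^2)*u^2 + mu* v^2)"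
      by (rule key_ineq) (use lam0 mu0 ql in \<open>auto simp: r_def u_def v_def\<close>)
    finally show "(cmod (Dm p q X $ 1 $ 2))^2 \<le> (lam*mu*r^2 + (lam-q^2)* v^2 + mu*u^2)*(lam*mu*r^2 + (lam-q^2)*u^2 + mu* v^2)" .
  qed
  then show "psd2 (Phi p q (adjoint2 X ** X) - adjoint2 (Phi p q X) ** Phi p q X)"
    unfolding Dm_def .
qed


lemma expL_eq: "expL t (Lgen a) = Phi (exp (-2*t)) (exp ((a-2)*t))"
  by (rule ext) (rule expL_Phi)

lemma not_schwarz:
  assumes "q^2 > (1+p)/2"
  shows "\<not> unital_schwarz (Phi p q)"
proof
  assume "unital_schwarz (Phi p q)"
  define X :: mat2 where "X = (\<chi> i j. if i = 2 \<and> j = 1 then 1 else 0)"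
  have "psd2 (Dm p q X)" using \<open>unital_schwarz (Phi p q)\<close> unfolding unital_schwarz_def Dm_def by blast
  then have P: "Re (\<Sum>i\<in>UNIV. cnj (w $ i) * (Dm p q X *v w) $ i) \<ge> 0" for w
    unfolding psd2_def by blast
  define w :: "complex^2" where "w = (\<chi> i. if i = 1 then 1 else 0)"
  have "(\<Sum>i\<in>UNIV. cnj (w $ i) * (Dm p q X *v w) $ i) = Dm p q X $ 1 $ 1"
    by (simp add: w_def sum_2 matrix_vector_mult_def)
  also have "\<dots> = of_real ((1+p)/2 - q^2)"
    unfolding Dm_11 by (simp add: X_def)
  finally show False using P[of w] assms by simp
qed

lemma lin_aux: "(p::real) < 1 + 2*y \<Longrightarrow> 1 + y \<le> z \<Longrightarrow> (1+p)/2 < z" by (simp add: field_simps)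

theorem mainTheorem5:
  fixes a :: real
  shows "(\<forall>t::real. t \<ge> 0 \<longrightarrow> unital_schwarz (expL t (Lgen a))) \<longleftrightarrow> a \<le> 3/2"
proof
  assume H: "\<forall>t::real. t \<ge> 0 \<longrightarrow> unital_schwarz (expL t (Lgen a))"
  show "a \<le> 3/2"
  proof (rule ccontr)
    assume "\<not> a \<le> 3/2"
    then have a: "a > 3/2" by simp
    define t where "t = (2*a-3)/8"
    have t0: "t > 0" using a unfolding t_def by simp
    define p where "p = exp (-2*t)"
    define q where "q = exp ((a-2)*t)"
    have q2: "q^2 = exp ((2*a-4)*t)" unfolding q_def exp_double[symmetric] by (simp add: algebra_simps)
    have "1 + (2*a-4)*t \<le> exp ((2*a-4)*t)" by (rule exp_ge_add_one_self)
    have e2: "1 + 2*t \<le> exp (2*t)" by (rule exp_ge_add_one_self)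
    have pe: "p * exp (2*t) = 1" unfolding p_def by (simp flip: exp_add)
    have pp: "p > 0" unfolding p_def by simp
    have p1: "p * (1+2*t) \<le> 1" using mult_left_mono[OF e2, of p] pp pe by simp
    have "(1 + (4*a-8)*t)*(1+2*t) - 1 = t*(2*a-3)*a" unfolding t_def by algebra
    moreover have "t*(2*a-3)*a > 0" using t0 a by simp
    ultimately have "p * (1+2*t) < (1 + (4*a-8)*t)*(1+2*t)" using p1 by linarith
    then have "p < 1 + (4*a-8)*t" using t0 by (simp add: mult_less_cancel_right)
    moreover have "(4*a-8)*t = 2*((2*a-4)*t)" by algebra
    ultimately have hp: "p < 1 + 2*((2*a-4)*t)" by simp
    have "(1+p)/2 < q^2" unfolding q2
      using hp \<open>1 + (2*a-4)*t \<le> exp ((2*a-4)*t)\<close>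
      by (rule lin_aux)
    then have "\<not> unital_schwarz (Phi p q)" by (rule not_schwarz)
    moreover have "unital_schwarz (Phi p q)" using H t0 unfolding p_def q_def expL_eq by simp
    ultimately show False by blast
  qed
next
  assume a: "a \<le> 3/2"
  show "\<forall>t::real. t \<ge> 0 \<longrightarrow> unital_schwarz (expL t (Lgen a))"
  proof (intro allI impI)
    fix t :: real assume t0: "t \<ge> 0"
    define p where "p = exp (-2*t)"
    define q where "q = exp ((a-2)*t)"
    define e where "e = exp (-t)"
    have q2: "q^2 = exp ((2*a-4)*t)" unfolding q_def exp_double[symmetric] by (simp add: algebra_simps)
    have pe: "p = e^2" unfolding p_def e_def exp_double[symmetric] by simp
    have "(2*a-4)*t \<le> -t" using mult_right_mono[of "2*a-4" "-1" t] a t0 by (simp add: algebra_simps)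
    then have "q^2 \<le> e" unfolding q2 e_def by simp
    also have "e \<le> (1+p)/2" unfolding pe using sum_squares_ge_zero[of "1 - e" 0] by (simp add: power2_eq_square algebra_simps)
    finally have qp: "q^2 \<le> (1+p)/2" .
    have "p \<le> 1" using t0 unfolding p_def by simp
    moreover have "0 \<le> p" "0 \<le> q" unfolding p_def q_def by simp_all
    ultimately have "unital_schwarz (Phi p q)" using qp by (intro schwarz_Phi)
    then show "unital_schwarz (expL t (Lgen a))" unfolding expL_eq p_def q_def .
  qed
qed

end
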